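(* Let $\mathcal{N}$ be either the $(2n+1)$-dimensional Heisenberg algebra ($q=2$) or the $(4n+3)$-dimensional quaternionic Heisenberg algebra ($q=4$) over $\mathbb{R}$, with basis $e_1,\dots,e_{qn}$ of $\mathcal{V}$ and $Z_1,\dots,Z_{q-1}$ of $\mathcal{Z}$ as in the context. Let $f:\mathcal{N}\to\mathcal{N}$ be a Lie ring homomorphism with $f(\mathcal{V})\subseteq\mathcal{V}$, $f(Z_i)\neq0$ for $i=1,\dots,q-1$, and $f(e_1)=e_1$. Let $g=\pi\circ f\circ\iota:\mathcal{N}_2\to\mathcal{N}_2$. Then: (1) $g$ is a Lie ring homomorphism with $g(\mathcal{V}_2)\subseteq\mathcal{V}_2$, $g(Z_i)\neq0$ for all $i$, and $g|_{\mathcal{Z}}=f|_{\mathcal{Z}}$; (2) if $X\in\mathbb{R}\text{-span}\{e_1,e_{q+1},\dots,e_{qn}\}$, then $f_{e_i}(X)=0$ for each $i=2,\dots,q$; (3) for all $x\in\mathbb{R}$ and $i,j\in\{2,\dots,q\}$, $f_{e_i}(xe_j)=f_{Z_{i-1}}(xZ_{j-1})$.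
   Context: A Lie ring homomorphism is an additive bracket-preserving map. Heisenberg case: basis $X_1,Y_1,\dots,X_n,Y_n,Z_1$ with $[X_t,Y_t]=Z_1$ and other brackets zero; set $(e_1,\dots,e_{2n})=(X_1,Y_1,\dots,X_n,Y_n)$. Quaternionic case: basis $X_t,Y_t,V_t,W_t$ ($t=1..n$), $Z_1,Z_2,Z_3$ with nonzero brackets (and antisymmetric counterparts) $[X_t,Y_t]=Z_1$, $[X_t,V_t]=Z_2$, $[X_t,W_t]=Z_3$, $[Y_t,V_t]=Z_3$, $[Y_t,W_t]=-Z_2$, $[V_t,W_t]=Z_1$, brackets between different $t$ zero; set $(e_1,\dots,e_{4n})=(X_1,Y_1,V_1,W_1,\dots,X_n,Y_n,V_n,W_n)$. In both cases $\mathcal{V}=\mathbb{R}\text{-span}\{e_1,\dots,e_{qn}\}$, $\mathcal{Z}=\mathbb{R}\text{-span}\{Z_1,\dots,Z_{q-1}\}$ is central, $\mathcal{V}_1=\mathbb{R}\text{-span}\{e_1,\dots,e_q\}$, $\mathcal{V}_2=\mathbb{R}\text{-span}\{e_{q+1},\dots,e_{qn}\}$, $\mathcal{N}_2=\mathcal{V}_2\oplus\mathcal{Z}$ (a subalgebra), $\pi:\mathcal{N}\to\mathcal{N}_2$ is the projection $\pi(X+Y)=Y$ for $X\in\mathcal{V}_1$, $Y\in\mathcal{N}_2$, and $\iota:\mathcal{N}_2\to\mathcal{N}$ the inclusion. For $X\in\mathcal{N}$, write $f(X)=\sum_{i=1}^{qn}f_{e_i}(X)e_i+\sum_{i=1}^{q-1}f_{Z_i}(X)Z_i$.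 *)

theory Defs
  imports Complex_Main "HOL-Library.Function_Algebras"
begin

text \<open>Basis labels: E i stands for e_i (i = 1..q*n), Zc k stands for Z_k (k = 1..q-1).
Addition and zero are the pointwise ones from Function_Algebras.\<close>

datatype idx = E nat | Zc nat

type_synonym elt = "idx \<Rightarrow> real"

definition basisE :: "nat \<Rightarrow> elt" where
  "basisE i = (\<lambda>k. if k = E i then 1 else 0)"

definition basisZ :: "nat \<Rightarrow> elt" where
  "basisZ i = (\<lambda>k. if k = Zc i then 1 else 0)"

definition smult :: "real \<Rightarrow> elt \<Rightarrow> elt" where
  "smult x v = (\<lambda>k. x * v k)"

text \<open>Structure constants within one block; positions 0..q-1 within the block
(q = 2: X,Y; q = 4: X,Y,V,W).  s0 q a b k for a < b is the Z_k coefficient of [a,b].\<close>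

fun s0 :: "nat \<Rightarrow> nat \<Rightarrow> nat \<Rightarrow> nat \<Rightarrow> real" where
  "s0 q a b k =
    (if q = 2 then (if a = 0 \<and> b = 1 \<and> k = 1 then 1 else 0)
     else if q = 4 then
       (if (a,b,k) = (0,1,1) then 1
        else if (a,b,k) = (0,2,2) then 1
        else if (a,b,k) = (0,3,3) then 1
        else if (a,b,k) = (1,2,3) then 1
        else if (a,b,k) = (1,3,2) then -1
        else if (a,b,k) = (2,3,1) then 1
        else 0)
     else 0)"

definition blockc :: "nat \<Rightarrow> nat \<Rightarrow> nat \<Rightarrow> nat \<Rightarrow> real" where
  "blockc q a b k = (if a < b then s0 q a b k else if b < a then - s0 q b a k else 0)"

text \<open>[e_a, e_b] = sum_k strc q a b k Z_k (a, b in 1..q*n).\<close>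
definition strc :: "nat \<Rightarrow> nat \<Rightarrow> nat \<Rightarrow> nat \<Rightarrow> real" where
  "strc q a b k = (if (a - 1) div q = (b - 1) div q
                   then blockc q ((a - 1) mod q) ((b - 1) mod q) k else 0)"

definition br :: "nat \<Rightarrow> nat \<Rightarrow> elt \<Rightarrow> elt \<Rightarrow> elt" where
  "br q n x y = (\<lambda>k. case k of E i \<Rightarrow> 0
     | Zc m \<Rightarrow> (\<Sum>a\<in>{1..q*n}. \<Sum>b\<in>{1..q*n}. x (E a) * y (E b) * strc q a b m))"

definition NN :: "nat \<Rightarrow> nat \<Rightarrow> elt set" where
  "NN q n = {v. \<forall>i. (v (E i) \<noteq> 0 \<longrightarrow> 1 \<le> i \<and> i \<le> q*n) \<and> (v (Zc i) \<noteq> 0 \<longrightarrow> 1 \<le> i \<and> i \<le> q - 1)}"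

definition VV :: "nat \<Rightarrow> nat \<Rightarrow> elt set" where
  "VV q n = {v \<in> NN q n. \<forall>i. v (Zc i) = 0}"

definition ZZ :: "nat \<Rightarrow> nat \<Rightarrow> elt set" where
  "ZZ q n = {v \<in> NN q n. \<forall>i. v (E i) = 0}"

definition VV2 :: "nat \<Rightarrow> nat \<Rightarrow> elt set" where
  "VV2 q n = {v \<in> VV q n. \<forall>i. i \<le> q \<longrightarrow> v (E i) = 0}"

definition NN2 :: "nat \<Rightarrow> nat \<Rightarrow> elt set" where
  "NN2 q n = {v \<in> NN q n. \<forall>i. i \<le> q \<longrightarrow> v (E i) = 0}"

text \<open>R-span of e_1, e_{q+1}, ..., e_{qn}.\<close>
definition W1 :: "nat \<Rightarrow> nat \<Rightarrow> elt set" where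
  "W1 q n = {v \<in> VV q n. \<forall>i. 2 \<le> i \<and> i \<le> q \<longrightarrow> v (E i) = 0}"

definition proj2 :: "nat \<Rightarrow> elt \<Rightarrow> elt" where
  "proj2 q v = (\<lambda>k. case k of E i \<Rightarrow> (if i \<le> q then 0 else v k) | Zc m \<Rightarrow> v k)"

definition lie_ring_hom :: "nat \<Rightarrow> nat \<Rightarrow> elt set \<Rightarrow> elt set \<Rightarrow> (elt \<Rightarrow> elt) \<Rightarrow> bool" where
  "lie_ring_hom q n A B h \<longleftrightarrow> h ` A \<subseteq> B \<and>
     (\<forall>x\<in>A. \<forall>y\<in>A. h (x + y) = h x + h y \<and> h (br q n x y) = br q n (h x) (h y))"

end

theory Submission imports Defs begin

lemma strc1:
  assumes q: "q = 2 \<or> q = 4" and b: "1 \<le> b"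
  shows "strc q 1 b m = (if b = m+1 \<and> 1 \<le> m \<and> m+1 \<le> q then 1 else 0)"
proof (cases "b \<le> q")
  case True
  have "b \<in> {1..q}" using b True by auto
  then show ?thesis using q
    by (auto simp: strc_def blockc_def)
next
  case False
  then have "(b-1) div q \<noteq> 0" using q by auto
  then show ?thesis using False q by (auto simp: strc_def)
qed

lemma br_e1:
  assumes q: "q = 2 \<or> q = 4" and n: "n \<ge> 1"
  shows "br q n (basisE 1) v (Zc m) = (if 1 \<le> m \<and> m+1 \<le> q then v (E (m+1)) else 0)"
proof -
  have qn: "q \<le> q*n" using n by simp
  have "br q n (basisE 1) v (Zc m) = (\<Sum>a\<in>{1..q*n}. if a = 1 then (\<Sum>b\<in>{1..q*n}. v (E b) * strc q 1 b m) else 0)"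
    unfolding br_def basisE_def idx.case by (rule sum.cong) auto
  also have "\<dots> = (\<Sum>b\<in>{1..q*n}. v (E b) * strc q 1 b m)"
    using q n by simp
  also have "\<dots> = (\<Sum>b\<in>{1..q*n}. if b = m+1 then (if 1 \<le> m \<and> m+1 \<le> q then v (E b) else 0) else 0)"
  proof (rule sum.cong[OF refl])
    fix b assume "b \<in> {1..q*n}"
    then show "v (E b) * strc q 1 b m = (if b = m+1 then (if 1 \<le> m \<and> m+1 \<le> q then v (E b) else 0) else 0)"
      using strc1[OF q, of b m] by auto
  qed
  also have "\<dots> = (if 1 \<le> m \<and> m+1 \<le> q then v (E (m+1)) else 0)"
  proof -
    have "m+1 \<le> q \<Longrightarrow> m+1 \<le> q*n" using qn by linarith
    then show ?thesis by (auto simp add: sum.delta')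
  qed
  finally show ?thesis .
qed


lemma br_E[simp]: "br q n x y (E i) = 0"
  by (simp add: br_def)

lemma proj2_br: "proj2 q (br q n x y) = br q n x y"
  by (rule ext) (auto simp: proj2_def split: idx.split)

lemma strc_cross: "1 \<le> a \<Longrightarrow> a \<le> q \<Longrightarrow> q < b \<Longrightarrow> strc q a b m = 0"
  "1 \<le> a \<Longrightarrow> a \<le> q \<Longrightarrow> q < b \<Longrightarrow> strc q b a m = 0"
proof -
  assume "1 \<le> a" "a \<le> q" "q < b"
  then have "(a-1) div q = 0" by auto
  have "q div q \<le> (b-1) div q" using \<open>q < b\<close> by (intro div_le_mono) auto
  then have "(b-1) div q \<noteq> 0" using \<open>1 \<le> a\<close> \<open>a \<le> q\<close> by auto
  note this \<open>(a-1) div q = 0\<close>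
  then show "strc q a b m = 0" "strc q b a m = 0" by (auto simp: strc_def)
qed

lemma strc11: "strc q 1 1 m = 0"
  by (simp add: strc_def blockc_def)

lemma br_proj2:
  assumes q: "0 < q" and u: "\<And>a. 2 \<le> a \<Longrightarrow> a \<le> q \<Longrightarrow> u (E a) = 0"
    and v: "\<And>a. 2 \<le> a \<Longrightarrow> a \<le> q \<Longrightarrow> v (E a) = 0"
  shows "br q n u v = br q n (proj2 q u) (proj2 q v)"
proof (rule ext)
  fix k show "br q n u v k = br q n (proj2 q u) (proj2 q v) k"
  proof (cases k)
    case (E i) then show ?thesis by simp
  next
    case (Zc m)
    have trm: "u (E a) * v (E b) * strc q a b m = proj2 q u (E a) * proj2 q v (E b) * strc q a b m"
      if "a \<in> {1..q*n}" "b \<in> {1..q*n}" for a b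
    proof -
      have a1: "1 \<le> a" "1 \<le> b" using that by auto
      show ?thesis
      proof (cases "a \<le> q")
        case True
        show ?thesis
        proof (cases "b \<le> q")
          case True
          show ?thesis
          proof (cases "a = 1 \<and> b = 1")
            case True then show ?thesis by (simp add: strc_def blockc_def)
          next
            case False
            then have "u (E a) = 0 \<or> v (E b) = 0" using u v a1 \<open>a \<le> q\<close> \<open>b \<le> q\<close> by force
            then show ?thesis using \<open>a \<le> q\<close> \<open>b \<le> q\<close> by (auto simp: proj2_def)
        qed
        next
          case False
          then show ?thesis using strc_cross(1)[of a q b m] a1 \<open>a \<le> q\<close> by simp
        qed
      next
        case False
        show ?thesis
        proof (cases "b \<le> q")
          case True
          then show ?thesis using strc_cross(2)[of b q a m] a1 False by simp
        next
          case False
          then show ?thesis using \<open>\<not> a \<le> q\<close> by (simp add: proj2_def)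
        qed
      qed
    qed
    show ?thesis unfolding br_def Zc idx.case by (auto intro!: sum.cong simp: trm)
  qed
qed

lemma br_e1_zero:
  assumes q: "q = 2 \<or> q = 4" and n: "n \<ge> 1"
    and x: "\<And>i. 2 \<le> i \<Longrightarrow> i \<le> q \<Longrightarrow> x (E i) = 0"
  shows "br q n (basisE 1) x = 0"
proof (rule ext)
  fix k show "br q n (basisE 1) x k = 0 k"
  proof (cases k)
    case (Zc m)
    show ?thesis using br_e1[OF q n, of x m] Zc x[of "m+1"] by auto
  qed auto
qed

lemma br_e1_smult:
  assumes q: "q = 2 \<or> q = 4" and n: "n \<ge> 1" and j: "j \<in> {2..q}"
  shows "br q n (basisE 1) (smult x (basisE j)) = smult x (basisZ (j-1))"
proof (rule ext)
  fix k show "br q n (basisE 1) (smult x (basisE j)) k = smult x (basisZ (j-1)) k"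
  proof (cases k)
    case (Zc m)
    show ?thesis using br_e1[OF q n, of "smult x (basisE j)" m] Zc j
      by (auto simp: smult_def basisE_def basisZ_def)
  qed (simp add: smult_def basisZ_def)
qed

lemma ZZ_br:
  assumes q: "q = 2 \<or> q = 4" and n: "n \<ge> 1" and z: "z \<in> ZZ q n"
  defines "w \<equiv> (\<lambda>k. case k of E i \<Rightarrow> (if 2 \<le> i \<and> i \<le> q then z (Zc (i-1)) else 0) | Zc _ \<Rightarrow> 0)"
  shows "w \<in> NN q n" "z = br q n (basisE 1) w"
proof -
  have qn: "q \<le> q*n" using n by simp
  have qn': "\<And>i. i \<le> q \<Longrightarrow> i \<le> q*n" using qn by linarith
  show "w \<in> NN q n" unfolding NN_def w_def using qn' by auto
  show "z = br q n (basisE 1) w"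
  proof (rule ext)
    fix k show "z k = br q n (basisE 1) w k"
    proof (cases k)
      case (E i) then show ?thesis using z by (simp add: ZZ_def)
    next
      case (Zc m)
      have "\<not>(1 \<le> m \<and> m+1 \<le> q) \<Longrightarrow> z (Zc m) = 0" using z q by (auto simp: ZZ_def NN_def)
      then show ?thesis using Zc q br_e1[OF q n, of w m] by (auto simp: w_def)
    qed
  qed
qed

theorem lemma6p4:
  fixes q n :: nat and f :: "elt \<Rightarrow> elt"
  assumes q: "q = 2 \<or> q = 4" and n: "n \<ge> 1"
    and hom: "lie_ring_hom q n (NN q n) (NN q n) f"
    and fV: "f ` VV q n \<subseteq> VV q n"
    and fZ: "\<forall>i\<in>{1..q-1}. f (basisZ i) \<noteq> 0"
    and fe1: "f (basisE 1) = basisE 1"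
  defines "g \<equiv> proj2 q \<circ> f"
  shows "(lie_ring_hom q n (NN2 q n) (NN2 q n) g
          \<and> g ` VV2 q n \<subseteq> VV2 q n
          \<and> (\<forall>i\<in>{1..q-1}. g (basisZ i) \<noteq> 0)
          \<and> (\<forall>z\<in>ZZ q n. g z = f z))
       \<and> (\<forall>X\<in>W1 q n. \<forall>i\<in>{2..q}. f X (E i) = 0)
       \<and> (\<forall>x::real. \<forall>i\<in>{2..q}. \<forall>j\<in>{2..q}.
            f (smult x (basisE j)) (E i) = f (smult x (basisZ (j-1))) (Zc (i-1)))"
proof -
  have q0: "0 < q" using q by auto
  have qn: "q \<le> q*n" using n by simp
  have himg: "\<And>x. x \<in> NN q n \<Longrightarrow> f x \<in> NN q n" using hom by (auto simp: lie_ring_hom_def)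
  have hadd: "\<And>x y. x \<in> NN q n \<Longrightarrow> y \<in> NN q n \<Longrightarrow> f (x + y) = f x + f y"
    using hom by (auto simp: lie_ring_hom_def)
  have hbr: "\<And>x y. x \<in> NN q n \<Longrightarrow> y \<in> NN q n \<Longrightarrow> f (br q n x y) = br q n (f x) (f y)"
    using hom by (auto simp: lie_ring_hom_def)
  have z0: "(0::elt) \<in> NN q n" by (simp add: NN_def)
  have f0: "f 0 = 0"
  proof -
    have "f (0 + 0) = f 0 + f 0" using hadd[OF z0 z0] .
    then show ?thesis by simp
  qed
  have e1N: "basisE 1 \<in> NN q n" using qn q0 by (auto simp: NN_def basisE_def)
  have kill: "f x (E i) = 0" if x: "x \<in> NN q n" and x0: "\<And>i. 2 \<le> i \<Longrightarrow> i \<le> q \<Longrightarrow> x (E i) = 0"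
    and i: "2 \<le> i" "i \<le> q" for x i
  proof -
    have "br q n (basisE 1) (f x) = f (br q n (basisE 1) x)" using hbr[OF e1N x] fe1 by simp
    also have "\<dots> = 0" using br_e1_zero[OF q n, of x] x0 f0 by simp
    finally have "br q n (basisE 1) (f x) (Zc (i-1)) = 0" by simp
    moreover have "i - 1 + 1 = i" "1 \<le> i - 1" using i by auto
    ultimately show ?thesis using br_e1[OF q n, of "f x" "i-1"] i by simp
  qed
  have NN2N: "\<And>x. x \<in> NN2 q n \<Longrightarrow> x \<in> NN q n" by (simp add: NN2_def)
  have proj2NN2: "proj2 q v \<in> NN2 q n" if "v \<in> NN q n" for v
    using that by (auto simp: NN2_def NN_def proj2_def)
  have proj2_add: "proj2 q (a + b) = proj2 q a + proj2 q b" for a b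
    by (rule ext) (auto simp: proj2_def split: idx.split)
  have P1: "lie_ring_hom q n (NN2 q n) (NN2 q n) g"
    unfolding lie_ring_hom_def
  proof (intro conjI ballI)
    show "g ` NN2 q n \<subseteq> NN2 q n" using himg NN2N proj2NN2 by (auto simp: g_def)
  next
    fix x y assume x: "x \<in> NN2 q n" and y: "y \<in> NN2 q n"
    show "g (x + y) = g x + g y" using hadd[OF NN2N[OF x] NN2N[OF y]] proj2_add by (simp add: g_def)
    have kx: "\<And>a. 2 \<le> a \<Longrightarrow> a \<le> q \<Longrightarrow> f x (E a) = 0"
      using kill[OF NN2N[OF x]] x by (auto simp: NN2_def)
    have ky: "\<And>a. 2 \<le> a \<Longrightarrow> a \<le> q \<Longrightarrow> f y (E a) = 0"
      using kill[OF NN2N[OF y]] y by (auto simp: NN2_def)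
    show "g (br q n x y) = br q n (g x) (g y)"
      using hbr[OF NN2N[OF x] NN2N[OF y]] br_proj2[of q "f x" "f y" n, OF q0 kx ky]
      by (simp add: g_def proj2_br)
  qed
  have P2: "g ` VV2 q n \<subseteq> VV2 q n"
  proof
    fix v assume "v \<in> g ` VV2 q n"
    then obtain x where x: "x \<in> VV2 q n" and v: "v = g x" by auto
    have "f x \<in> VV q n" using fV x by (auto simp: VV2_def)
    then show "v \<in> VV2 q n" unfolding v g_def
      by (auto simp: VV2_def VV_def NN_def proj2_def)
  qed
  have P4: "\<forall>z\<in>ZZ q n. g z = f z"
  proof
    fix z assume z: "z \<in> ZZ q n"
    obtain w where w: "w \<in> NN q n" "z = br q n (basisE 1) w" using ZZ_br[OF q n z] by blast
    have "f z = br q n (basisE 1) (f w)" using hbr[OF e1N w(1)] fe1 w(2) by simp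
    then show "g z = f z" by (simp add: g_def proj2_br)
  qed
  have P3: "\<forall>i\<in>{1..q-1}. g (basisZ i) \<noteq> 0"
  proof
    fix i assume i: "i \<in> {1..q-1}"
    have "basisZ i \<in> ZZ q n" using i by (auto simp: ZZ_def NN_def basisZ_def)
    then show "g (basisZ i) \<noteq> 0" using P4 fZ i by auto
  qed
  have P5: "\<forall>X\<in>W1 q n. \<forall>i\<in>{2..q}. f X (E i) = 0"
  proof (intro ballI)
    fix X i assume X: "X \<in> W1 q n" and i: "i \<in> {2..q}"
    show "f X (E i) = 0" using kill[of X i] X i by (auto simp: W1_def VV_def)
  qed
  have P6: "\<forall>x::real. \<forall>i\<in>{2..q}. \<forall>j\<in>{2..q}.
            f (smult x (basisE j)) (E i) = f (smult x (basisZ (j-1))) (Zc (i-1))"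
  proof (intro allI ballI)
    fix x :: real and i j assume i: "i \<in> {2..q}" and j: "j \<in> {2..q}"
    have "j \<le> q*n" using j qn by (meson atLeastAtMost_iff le_trans)
    then have jN: "smult x (basisE j) \<in> NN q n" using j by (auto simp: NN_def smult_def basisE_def)
    have "f (smult x (basisZ (j-1))) = br q n (basisE 1) (f (smult x (basisE j)))"
      using hbr[OF e1N jN] fe1 br_e1_smult[OF q n j, of x] by simp
    then show "f (smult x (basisE j)) (E i) = f (smult x (basisZ (j-1))) (Zc (i-1))"
    proof -
      have "i - 1 + 1 = i" "1 \<le> i - 1" using i by auto
      then show ?thesis using br_e1[OF q n, of "f (smult x (basisE j))" "i-1"] i \<open>f (smult x (basisZ (j-1))) = _\<close> by simp
    qed
  qed
  show ?thesis using P1 P2 P3 P4 P5 P6 by blast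
qed

end
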